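(* Let $A=(a_{ij})_{i,j=1}^n$ be the weighted adjacency matrix of a (possibly directed) graph on vertices $v_1,\dots,v_n$, with nonnegative entries, such that every out-degree $o(v_i)=\sum_{j=1}^n a_{ij}$ is positive. Let $D_o=\operatorname{diag}(o(v_1),\dots,o(v_n))$ and $P=D_o^{-1}A$. Define $\nu(v_j)=\sum_{\ell=1}^n p_{\ell j}$, assume $\nu(v_j)>0$ for all $j$, and let $D_\nu=\operatorname{diag}(\nu(v_1),\dots,\nu(v_n))$. Then the matrix $Q=P D_\nu^{-1} P^\top$ is doubly stochastic.
   Context: $P$ is the row-stochastic transition matrix of the random walk on the graph ($p_{ij}$ is the probability of moving from $v_i$ to $v_j$ in one step). The condition $\nu(v_j)>0$ means every vertex has at least one incoming edge (e.g., ensured by adding self-loops), so that $D_\nu$ is invertible. A doubly stochastic matrix is a nonnegative matrix whose rows and columns each sum to $1$. *)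

theory Defs
  imports "HOL-Analysis.Analysis"
begin

definition diag_mat :: "('n::finite \<Rightarrow> real) \<Rightarrow> real^'n^'n" where
  "diag_mat d = (\<chi> i j. if i = j then d i else 0)"

definition out_deg :: "real^'n^'n \<Rightarrow> 'n::finite \<Rightarrow> real" where
  "out_deg A i = (\<Sum>j\<in>UNIV. A $ i $ j)"

definition doubly_stochastic :: "real^'n^'n \<Rightarrow> bool" where
  "doubly_stochastic M \<longleftrightarrow>
     (\<forall>i j. 0 \<le> M $ i $ j) \<and>
     (\<forall>i. (\<Sum>j\<in>UNIV. M $ i $ j) = 1) \<and>
     (\<forall>j. (\<Sum>i\<in>UNIV. M $ i $ j) = 1)"

end

theory Submission
  imports Defs
begin

lemma inv_unique_aux:
  fixes D B :: "real^'n^'n"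
  assumes "D ** B = mat 1" "B ** D = mat 1"
  shows "matrix_inv D = B"
proof -
  let ?C = "matrix_inv D"
  have "D ** ?C = mat 1 \<and> ?C ** D = mat 1"
    unfolding matrix_inv_def by (rule someI[of _ B]) (use assms in auto)
  then have "?C ** D = mat 1" by auto
  have "?C = ?C ** (D ** B)" using assms by simp
  also have "\<dots> = (?C ** D) ** B" by (simp add: matrix_mul_assoc)
  also have "\<dots> = B" using \<open>?C ** D = mat 1\<close> by simp
  finally show ?thesis .
qed

lemma diag_left: "(diag_mat d ** M) $ i $ j = d i * M $ i $ j"
  by (simp add: diag_mat_def matrix_matrix_mult_def if_distrib[of "\<lambda>x. x * y" for y] cong: if_cong)

lemma diag_right: "(M ** diag_mat d) $ i $ j = M $ i $ j * d j"
  by (simp add: diag_mat_def matrix_matrix_mult_def if_distrib[of "\<lambda>x. y * x" for y] cong: if_cong)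

lemma diag_inv:
  fixes d :: "'n::finite \<Rightarrow> real"
  assumes "\<forall>i. d i \<noteq> 0"
  shows "matrix_inv (diag_mat d) = diag_mat (\<lambda>i. 1 / d i)"
proof (rule inv_unique_aux)
  show "diag_mat d ** diag_mat (\<lambda>i. 1 / d i) = mat 1"
    using assms by (simp add: diag_left vec_eq_iff mat_def) (simp add: diag_mat_def)
  show "diag_mat (\<lambda>i. 1 / d i) ** diag_mat d = mat 1"
    using assms by (simp add: diag_left vec_eq_iff mat_def) (simp add: diag_mat_def)
qed

theorem mainTheorem1:
  fixes A :: "real^'n^'n"
  assumes nonneg: "\<forall>i j. 0 \<le> A $ i $ j"
    and out_pos: "\<forall>i. out_deg A i > 0"
    and P_def: "P = matrix_inv (diag_mat (out_deg A)) ** A"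
    and nu_def: "\<forall>j. nu j = (\<Sum>l\<in>UNIV. P $ l $ j)"
    and nu_pos: "\<forall>j. nu j > 0"
  shows "doubly_stochastic (P ** matrix_inv (diag_mat nu) ** transpose P)"
proof -
  have Pij: "P $ i $ j = A $ i $ j / out_deg A i" for i j
  proof -
    have "\<forall>i. out_deg A i \<noteq> 0" using out_pos by (simp add: less_imp_neq[symmetric])
    then show ?thesis unfolding P_def by (simp add: diag_inv diag_left)
  qed
  have Pnn: "0 \<le> P $ i $ j" for i j using Pij nonneg out_pos by (simp add: less_imp_le)
  have Prow: "(\<Sum>j\<in>UNIV. P $ i $ j) = 1" for i
  proof -
    have "(\<Sum>j\<in>UNIV. P $ i $ j) = (\<Sum>j\<in>UNIV. A $ i $ j) / out_deg A i"
      by (simp add: Pij sum_divide_distrib)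
    also have "\<dots> = 1" using out_pos[rule_format, of i] by (simp add: out_deg_def)
    finally show ?thesis .
  qed
  define Q where "Q = P ** matrix_inv (diag_mat nu) ** transpose P"
  have Qik: "Q $ i $ k = (\<Sum>j\<in>UNIV. P $ i $ j * P $ k $ j / nu j)" for i k
  proof -
    have "\<forall>i. nu i \<noteq> 0" using nu_pos by (simp add: less_imp_neq[symmetric])
    then have "Q = (P ** diag_mat (\<lambda>i. 1 / nu i)) ** transpose P" unfolding Q_def by (simp add: diag_inv)
    then have "Q $ i $ k = (\<Sum>j\<in>UNIV. (P ** diag_mat (\<lambda>i. 1 / nu i)) $ i $ j * transpose P $ j $ k)"
      by (simp add: matrix_matrix_mult_def)
    then show ?thesis by (simp add: diag_right transpose_def)
  qed
  have rows: "(\<Sum>k\<in>UNIV. Q $ i $ k) = 1" for i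
  proof -
    have "(\<Sum>k\<in>UNIV. Q $ i $ k) = (\<Sum>j\<in>UNIV. \<Sum>k\<in>UNIV. P $ i $ j * P $ k $ j / nu j)"
      unfolding Qik by (rule sum.swap)
    also have "\<dots> = (\<Sum>j\<in>UNIV. P $ i $ j / nu j * (\<Sum>k\<in>UNIV. P $ k $ j))"
      by (simp add: sum_distrib_left)
    also have "\<dots> = (\<Sum>j\<in>UNIV. P $ i $ j)"
      using nu_def nu_pos by (intro sum.cong) (auto simp: less_imp_neq[symmetric])
    finally show ?thesis using Prow by simp
  qed
  have sym: "Q $ i $ k = Q $ k $ i" for i k by (simp add: Qik mult.commute)
  have nn: "0 \<le> Q $ i $ k" for i k
    unfolding Qik using Pnn nu_pos by (intro sum_nonneg) (simp add: less_imp_le)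
  show ?thesis unfolding Q_def[symmetric] doubly_stochastic_def
  proof (intro conjI allI)
    fix j
    have "(\<Sum>i\<in>UNIV. Q $ i $ j) = (\<Sum>i\<in>UNIV. Q $ j $ i)" using sym by simp
    then show "(\<Sum>i\<in>UNIV. Q $ i $ j) = 1" using rows by simp
  qed (use rows nn in auto)
qed

end
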